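(* Let $\mathcal{A}$ and $\mathcal{U}$ be Banach algebras, $\theta$ a nonzero character on $\mathcal{A}$, $\mathcal{X}$ a simple Banach $(\mathcal{A}\times_{\theta}\mathcal{U})$-bimodule, and $D:\mathcal{A}\times_{\theta}\mathcal{U}\to\mathcal{X}$ a derivation. Then $D$ is continuous if either of the following holds: (i) $\mathrm{ann}_{\mathcal{X}}\mathcal{U}\neq\mathcal{X}$ and $Z_{\mathcal{X}}(\mathcal{A})\neq\mathcal{X}$; (ii) $\mathrm{ann}_{\mathcal{X}}\mathcal{U}=\{0\}$ and $Z_{\mathcal{X}}(\mathcal{A})\neq\mathcal{X}$.
   Context: The Lau product $\mathcal{A}\times_{\theta}\mathcal{U}$ is $\mathcal{A}\times\mathcal{U}$ with norm $\|(a,u)\|=\|a\|+\|u\|$ and product $(a,u)(a',u')=(aa',\theta(a)u'+\theta(a')u+uu')$. $\mathcal{X}$ is an $\mathcal{A}$-bimodule via $ax=(a,0)x$, $xa=x(a,0)$ and a $\mathcal{U}$-bimodule via $ux=(0,u)x$, $xu=x(0,u)$. Simple means the only closed $(\mathcal{A}\times_{\theta}\mathcal{U})$-subbimodules of $\mathcal{X}$ are $\{0\}$ and $\mathcal{X}$. $\mathrm{ann}_{\mathcal{X}}\mathcal{U}=\{x: ux=xu=0\ \forall u\in\mathcal{U}\}$; $Z_{\mathcal{X}}(\mathcal{A})=\{x: ax=xa\ \forall a\in\mathcal{A}\}$. *)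

theory Defs
  imports "HOL-Analysis.Analysis"
begin

text \<open>HOL has no complex vector spaces, so we add a complex scalar multiplication
  extending the real one.\<close>

class complex_normed_space = real_normed_vector +
  fixes scaleC :: "complex \<Rightarrow> 'a \<Rightarrow> 'a" (infixr "*\<^sub>C" 75)
  assumes scaleC_add_right: "c *\<^sub>C (x + y) = c *\<^sub>C x + c *\<^sub>C y"
    and scaleC_add_left: "(c + d) *\<^sub>C x = c *\<^sub>C x + d *\<^sub>C x"
    and scaleC_scaleC: "c *\<^sub>C (d *\<^sub>C x) = (c * d) *\<^sub>C x"
    and scaleC_one: "1 *\<^sub>C x = x"
    and scaleC_of_real: "complex_of_real r *\<^sub>C x = r *\<^sub>R x"
    and norm_scaleC: "norm (c *\<^sub>C x) = cmod c * norm x"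

class complex_banach = complex_normed_space + banach

class complex_banach_algebra = complex_banach + real_normed_algebra +
  assumes scaleC_mult_left: "(c *\<^sub>C x) * y = c *\<^sub>C (x * y)"
    and scaleC_mult_right: "x * (c *\<^sub>C y) = c *\<^sub>C (x * y)"

definition character :: "('a::complex_banach_algebra \<Rightarrow> complex) \<Rightarrow> bool" where
  "character \<theta> \<longleftrightarrow>
     (\<forall>a b. \<theta> (a + b) = \<theta> a + \<theta> b) \<and>
     (\<forall>c a. \<theta> (c *\<^sub>C a) = c * \<theta> a) \<and>
     (\<forall>a b. \<theta> (a * b) = \<theta> a * \<theta> b)"

definition lau_mult ::
  "('a::complex_banach_algebra \<Rightarrow> complex) \<Rightarrow> 'a \<times> 'u::complex_banach_algebra \<Rightarrow> 'a \<times> 'u \<Rightarrow> 'a \<times> 'u" where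
  "lau_mult \<theta> p q = (fst p * fst q,
      \<theta> (fst p) *\<^sub>C snd q + \<theta> (fst q) *\<^sub>C snd p + snd p * snd q)"

definition lau_norm :: "'a::real_normed_vector \<times> 'u::real_normed_vector \<Rightarrow> real" where
  "lau_norm p = norm (fst p) + norm (snd p)"

definition lau_scale :: "complex \<Rightarrow> 'a::complex_normed_space \<times> 'u::complex_normed_space \<Rightarrow> 'a \<times> 'u" where
  "lau_scale c p = (c *\<^sub>C fst p, c *\<^sub>C snd p)"

text \<open>\<open>L p x\<close> is the left action \<open>p\<cdot>x\<close>, \<open>R x p\<close> the right action \<open>x\<cdot>p\<close>.\<close>
definition lau_banach_bimodule ::
  "('a::complex_banach_algebra \<Rightarrow> complex) \<Rightarrow> ('a \<times> 'u::complex_banach_algebra \<Rightarrow> 'x::complex_banach \<Rightarrow> 'x)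
   \<Rightarrow> ('x \<Rightarrow> 'a \<times> 'u \<Rightarrow> 'x) \<Rightarrow> bool" where
  "lau_banach_bimodule \<theta> L R \<longleftrightarrow>
     (\<forall>p q x. L (p + q) x = L p x + L q x) \<and>
     (\<forall>p x y. L p (x + y) = L p x + L p y) \<and>
     (\<forall>c p x. L (lau_scale c p) x = c *\<^sub>C L p x) \<and>
     (\<forall>c p x. L p (c *\<^sub>C x) = c *\<^sub>C L p x) \<and>
     (\<forall>p q x. R x (p + q) = R x p + R x q) \<and>
     (\<forall>p x y. R (x + y) p = R x p + R y p) \<and>
     (\<forall>c p x. R x (lau_scale c p) = c *\<^sub>C R x p) \<and>
     (\<forall>c p x. R (c *\<^sub>C x) p = c *\<^sub>C R x p) \<and>
     (\<forall>p q x. L (lau_mult \<theta> p q) x = L p (L q x)) \<and>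
     (\<forall>p q x. R x (lau_mult \<theta> p q) = R (R x p) q) \<and>
     (\<forall>p q x. R (L p x) q = L p (R x q)) \<and>
     (\<exists>K. \<forall>p x. norm (L p x) \<le> K * lau_norm p * norm x \<and>
                norm (R x p) \<le> K * lau_norm p * norm x)"

definition closed_subbimodule ::
  "('a \<times> 'u \<Rightarrow> 'x::complex_banach \<Rightarrow> 'x) \<Rightarrow> ('x \<Rightarrow> 'a \<times> 'u \<Rightarrow> 'x) \<Rightarrow> 'x set \<Rightarrow> bool" where
  "closed_subbimodule L R M \<longleftrightarrow> closed M \<and> 0 \<in> M \<and>
     (\<forall>x\<in>M. \<forall>y\<in>M. x + y \<in> M) \<and> (\<forall>c. \<forall>x\<in>M. c *\<^sub>C x \<in> M) \<and>
     (\<forall>p. \<forall>x\<in>M. L p x \<in> M \<and> R x p \<in> M)"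

definition simple_bimodule ::
  "('a \<times> 'u \<Rightarrow> 'x::complex_banach \<Rightarrow> 'x) \<Rightarrow> ('x \<Rightarrow> 'a \<times> 'u \<Rightarrow> 'x) \<Rightarrow> bool" where
  "simple_bimodule L R \<longleftrightarrow>
     (\<forall>M. closed_subbimodule L R M \<longrightarrow> M = {0} \<or> M = UNIV)"

text \<open>\<open>ann\<^sub>X U\<close>, with \<open>u x = (0,u) x\<close>, \<open>x u = x (0,u)\<close>.\<close>
definition ann_U :: "('a::zero \<times> 'u \<Rightarrow> 'x::zero \<Rightarrow> 'x) \<Rightarrow> ('x \<Rightarrow> 'a \<times> 'u \<Rightarrow> 'x) \<Rightarrow> 'x set" where
  "ann_U L R = {x. \<forall>u. L (0, u) x = 0 \<and> R x (0, u) = 0}"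

text \<open>\<open>Z\<^sub>X(A)\<close>, with \<open>a x = (a,0) x\<close>, \<open>x a = x (a,0)\<close>.\<close>
definition center_A :: "('a \<times> 'u::zero \<Rightarrow> 'x \<Rightarrow> 'x) \<Rightarrow> ('x \<Rightarrow> 'a \<times> 'u \<Rightarrow> 'x) \<Rightarrow> 'x set" where
  "center_A L R = {x. \<forall>a. L (a, 0) x = R x (a, 0)}"

definition lau_derivation ::
  "('a::complex_banach_algebra \<Rightarrow> complex) \<Rightarrow> ('a \<times> 'u::complex_banach_algebra \<Rightarrow> 'x::complex_banach \<Rightarrow> 'x)
   \<Rightarrow> ('x \<Rightarrow> 'a \<times> 'u \<Rightarrow> 'x) \<Rightarrow> ('a \<times> 'u \<Rightarrow> 'x) \<Rightarrow> bool" where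
  "lau_derivation \<theta> L R D \<longleftrightarrow>
     (\<forall>p q. D (p + q) = D p + D q) \<and>
     (\<forall>c p. D (lau_scale c p) = c *\<^sub>C D p) \<and>
     (\<forall>p q. D (lau_mult \<theta> p q) = R (D p) q + L p (D q))"

end

theory Submission
  imports Defs
begin

declare scaleC_one[simp]

lemma scaleC_zero_right[simp]: "c *\<^sub>C (0::'a::complex_normed_space) = 0"
  by (metis add_cancel_right_right scaleC_add_right)
lemma scaleC_zero_left[simp]: "(0::complex) *\<^sub>C (x::'a::complex_normed_space) = 0"
  by (metis scaleC_of_real of_real_0 scaleR_zero_left)
lemma scaleC_minus_right: "c *\<^sub>C (- (x::'a::complex_normed_space)) = - (c *\<^sub>C x)"
  by (metis add.right_inverse eq_neg_iff_add_eq_0 scaleC_add_right scaleC_zero_right)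
lemma scaleC_diff_right: "c *\<^sub>C ((x::'a::complex_normed_space) - y) = c *\<^sub>C x - c *\<^sub>C y"
  by (metis diff_conv_add_uminus scaleC_add_right scaleC_minus_right)
lemma scaleC_real: "complex_of_real r *\<^sub>C (x::'a::complex_normed_space) = r *\<^sub>R x"
  by (rule scaleC_of_real)

lemma euclidean_interior_of: "euclidean interior_of S = interior S"
  by (auto simp: interior_of_def interior_def)

lemma closed_graph_thm:
  fixes T :: "'v::banach \<Rightarrow> 'w::banach"
  assumes lin: "linear T"
    and cl: "\<And>q z. q \<longlonglongrightarrow> 0 \<Longrightarrow> (\<lambda>k. T (q k)) \<longlonglongrightarrow> z \<Longrightarrow> z = 0"
  shows "bounded_linear T"
proof -
  define F where "F n = closure {x. norm (T x) \<le> real n}" for n :: nat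
  have "\<exists>n. interior (F n) \<noteq> {}"
  proof (rule ccontr)
    assume "\<not> ?thesis"
    hence H: "\<And>n. interior (F n) = {}" by blast
    have "euclidean interior_of \<Union>(range F) = {}"
    proof (rule Baire_category_alt)
      show "completely_metrizable_space (euclidean::'v topology) \<or> locally_compact_space (euclidean::'v topology) \<and> regular_space (euclidean::'v topology)"
        using completely_metrizable_space_euclidean by blast
      show "countable (range F)" by simp
      fix S assume "S \<in> range F"
      then show "closedin euclidean S \<and> euclidean interior_of S = {}"
        using H by (auto simp: F_def)
    qed
    moreover have "\<Union>(range F) = UNIV"
    proof -
      have "x \<in> F (nat (ceiling (norm (T x))))" for x
        unfolding F_def by (rule closure_subset[THEN subsetD]) (simp add: real_nat_ceiling_ge)
      then show ?thesis by blast
    qed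
    ultimately show False by (simp add: euclidean_interior_of)
  qed
  then obtain n x0 where "x0 \<in> interior (F n)" by blast
  then obtain r where r: "r > 0" "ball x0 r \<subseteq> F n"
    using open_contains_ball by (meson interior_subset mem_interior)
  define G where "G = {x. norm (T x) \<le> real n}"
  have A: "\<exists>y. norm (T y) \<le> 2 * real n \<and> norm (h - y) < e" if hr: "norm h < r" and e: "e > 0" for h e
  proof -
    have "x0 + h \<in> closure G" "x0 \<in> closure G"
      using r hr by (auto simp: F_def G_def dist_norm)
    then obtain a b where ab: "a \<in> G" "dist a (x0 + h) < e/2" "b \<in> G" "dist b x0 < e/2"
      using e by (meson closure_approachable half_gt_zero)
    have "norm (T (a - b)) \<le> 2 * real n"
      using ab(1,3) by (simp add: G_def linear_diff[OF lin]) (smt (verit) norm_triangle_ineq4)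
    moreover have "norm (h - (a - b)) < e"
    proof -
      have "h - (a - b) = (x0 + h - a) - (x0 - b)" by (simp add: algebra_simps)
      then have "norm (h - (a - b)) \<le> norm (x0 + h - a) + norm (x0 - b)"
        by (metis norm_triangle_ineq4)
      moreover have "norm (x0 + h - a) < e/2" "norm (x0 - b) < e/2"
        using ab(2,4) by (simp_all add: dist_norm norm_minus_commute)
      ultimately show ?thesis by linarith
    qed
    ultimately show ?thesis by blast
  qed
  define M where "M = 4 * real n / r + 1"
  have "0 \<le> 4 * real n / r" using r by simp
  hence Mpos: "M > 0" by (simp add: M_def)
  have B: "\<exists>y. norm (T y) \<le> M * norm h \<and> norm (h - y) \<le> norm h / 2" for h
  proof (cases "h = 0")
    case True then show ?thesis by (intro exI[of _ 0]) (simp add: linear_0[OF lin])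
  next
    case False
    define s where "s = r / (2 * norm h)"
    have s: "s > 0" using r False by (simp add: s_def)
    have "norm (s *\<^sub>R h) < r" using r False by (simp add: s_def)
    moreover have "s * (norm h / 2) > 0" using s False by simp
    ultimately obtain y' where y': "norm (T y') \<le> 2 * real n" "norm (s *\<^sub>R h - y') < s * (norm h / 2)"
      using A by blast
    define y where "y = (1/s) *\<^sub>R y'"
    have "norm (T y) = norm (T y') / s"
      using s by (simp add: y_def linear_scale[OF lin])
    also have "\<dots> \<le> 2 * real n / s" using y' s by (simp add: divide_right_mono)
    also have "\<dots> = 4 * real n / r * norm h" using r False by (simp add: s_def)
    also have "\<dots> \<le> M * norm h" by (simp add: M_def distrib_right)
    finally have 1: "norm (T y) \<le> M * norm h" .
    have "s *\<^sub>R h - y' = s *\<^sub>R (h - y)" using s by (simp add: y_def scaleR_diff_right)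
    hence "s * norm (h - y) < s * (norm h / 2)" using y' s by simp
    hence "norm (h - y) \<le> norm h / 2" using s by simp
    with 1 show ?thesis by blast
  qed
  then obtain f where f: "\<And>h. norm (T (f h)) \<le> M * norm h" "\<And>h. norm (h - f h) \<le> norm h / 2"
    by metis
  have bound: "norm (T h) \<le> (2 * M) * norm h" for h
  proof -
    define res where "res k = ((\<lambda>x. x - f x) ^^ k) h" for k
    have res0: "res 0 = h" and resS: "res (Suc k) = res k - f (res k)" for k
      by (simp_all add: res_def)
    have nres: "norm (res k) \<le> norm h * (1/2) ^ k" for k
    proof (induction k)
      case 0 then show ?case by (simp add: res0)
    next
      case (Suc k)
      have "norm (res (Suc k)) \<le> norm (res k) / 2" using f(2) by (simp add: resS)
      also have "\<dots> \<le> norm h * (1/2) ^ k / 2" using Suc by simp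
      finally show ?case by (simp add: mult.assoc)
    qed
    have ps: "T (h - res k) = (\<Sum>j<k. T (f (res j)))" for k
    proof (induction k)
      case 0 then show ?case by (simp add: res0 linear_0[OF lin])
    next
      case (Suc k)
      have eq: "h - res (Suc k) = (h - res k) + f (res k)" by (simp add: resS)
      have "T (h - res (Suc k)) = T (h - res k) + T (f (res k))"
        by (simp only: eq linear_add[OF lin])
      then show ?case using Suc by simp
    qed
    have tn: "norm (T (f (res j))) \<le> M * norm h * (1/2) ^ j" for j
    proof -
      have "norm (T (f (res j))) \<le> M * norm (res j)" by (rule f(1))
      also have "\<dots> \<le> M * (norm h * (1/2) ^ j)" using Mpos nres[of j] by (intro mult_left_mono) auto
      finally show ?thesis by (simp add: mult.assoc)
    qed
    have sg: "summable (\<lambda>j. M * norm h * (1/2::real) ^ j)"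
      by (intro summable_mult summable_geometric) simp
    have sm: "summable (\<lambda>j. T (f (res j)))"
      by (rule summable_comparison_test[OF _ sg]) (use tn in auto)
    then have lim1: "(\<lambda>k. T (h - res k)) \<longlonglongrightarrow> suminf (\<lambda>j. T (f (res j)))"
      unfolding ps by (simp add: summable_LIMSEQ)
    have r0: "res \<longlonglongrightarrow> 0"
    proof (rule tendsto_norm_zero_cancel, rule real_tendsto_sandwich[of "\<lambda>_. 0" _ _ "\<lambda>k. norm h * (1/2) ^ k"])
      show "\<forall>\<^sub>F k in sequentially. 0 \<le> norm (res k)" by simp
      show "\<forall>\<^sub>F k in sequentially. norm (res k) \<le> norm h * (1/2) ^ k"
        using nres by simp
      show "(\<lambda>k. 0) \<longlonglongrightarrow> (0::real)" by simp
      show "(\<lambda>k. norm h * (1/2::real) ^ k) \<longlonglongrightarrow> 0"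
        by (intro tendsto_mult_right_zero LIMSEQ_power_zero) simp
    qed
    have "(\<lambda>k. T (res k)) \<longlonglongrightarrow> T h - suminf (\<lambda>j. T (f (res j)))"
    proof -
      have "(\<lambda>k. T h - T (h - res k)) \<longlonglongrightarrow> T h - suminf (\<lambda>j. T (f (res j)))"
        by (intro tendsto_diff tendsto_const lim1)
      moreover have "T h - T (h - res k) = T (res k)" for k by (simp add: linear_diff[OF lin])
      ultimately show ?thesis by simp
    qed
    from cl[OF r0 this] have eq: "T h = suminf (\<lambda>j. T (f (res j)))" by simp
    have "norm (T (h - res k)) \<le> 2 * M * norm h" for k
    proof -
      have "norm (T (h - res k)) \<le> (\<Sum>j<k. norm (T (f (res j))))" unfolding ps by (rule norm_sum)
      also have "\<dots> \<le> (\<Sum>j<k. M * norm h * (1/2) ^ j)" by (rule sum_mono[OF tn])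
      also have "\<dots> \<le> (\<Sum>j. M * norm h * (1/2::real) ^ j)"
        by (rule sum_le_suminf[OF sg]) (use Mpos in auto)
      also have "\<dots> = 2 * M * norm h"
        using suminf_geometric[of "1/2::real"] by (simp add: suminf_mult)
      finally show ?thesis .
    qed
    hence "norm (suminf (\<lambda>j. T (f (res j)))) \<le> 2 * M * norm h"
      by (intro tendsto_upperbound[OF tendsto_norm[OF lim1]]) auto
    with eq show ?thesis by simp
  qed
  show ?thesis
    using lin bound by (intro bounded_linear_intro[of _ "2 * M"]) (auto simp: linear_add linear_scale mult.commute)
qed


lemma scaleC_scaleR_left: "(r *\<^sub>R c) *\<^sub>C (x::'a::complex_normed_space) = r *\<^sub>R (c *\<^sub>C x)"
  by (metis scaleC_of_real scaleC_scaleC scaleR_conv_of_real)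
lemma scaleC_scaleR_right: "c *\<^sub>C (r *\<^sub>R (x::'a::complex_normed_space)) = r *\<^sub>R (c *\<^sub>C x)"
  by (metis mult.commute scaleC_of_real scaleC_scaleC)
lemma scaleC_diff_left: "(c - d) *\<^sub>C (x::'a::complex_normed_space) = c *\<^sub>C x - d *\<^sub>C x"
  by (metis add_diff_cancel_right' diff_add_cancel scaleC_add_left)
lemma scaleC_minus_left: "(- c) *\<^sub>C (x::'a::complex_normed_space) = - (c *\<^sub>C x)"
  by (metis diff_0 scaleC_diff_left scaleC_zero_left)
lemma bl_scaleC_left: "bounded_linear (\<lambda>c. c *\<^sub>C (x::'a::complex_normed_space))"
  by (rule bounded_linear_intro[of _ "norm x"]) (auto simp: scaleC_add_left scaleC_scaleR_left norm_scaleC)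

lemma lau_scale_real: "lau_scale (complex_of_real r) p = r *\<^sub>R p"
  by (simp add: lau_scale_def scaleC_of_real prod_eq_iff)

lemma lau_norm_le: "lau_norm p \<le> 2 * norm p"
proof -
  obtain a b where p: "p = (a, b)" by fastforce
  have "norm a \<le> norm (a, b)" "norm b \<le> norm (a, b)" by (rule norm_fst_le, rule norm_snd_le)
  then show ?thesis unfolding lau_norm_def p by simp
qed

lemma lau_mult_Pair[simp]:
  "lau_mult \<theta> (a, u) (b, v) = (a * b, \<theta> a *\<^sub>C v + \<theta> b *\<^sub>C u + u * v)"
  by (simp add: lau_mult_def)

locale LS =
  fixes \<theta> :: "'a::complex_banach_algebra \<Rightarrow> complex"
    and L :: "'a \<times> 'u::complex_banach_algebra \<Rightarrow> 'x::complex_banach \<Rightarrow> 'x"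
    and R :: "'x \<Rightarrow> 'a \<times> 'u \<Rightarrow> 'x"
  assumes chr: "character \<theta>" and bim: "lau_banach_bimodule \<theta> L R"
begin

lemma th_add: "\<theta> (a + b) = \<theta> a + \<theta> b" using chr unfolding character_def by blast
lemma th_scale: "\<theta> (c *\<^sub>C a) = c * \<theta> a" using chr unfolding character_def by blast
lemma th_mult: "\<theta> (a * b) = \<theta> a * \<theta> b" using chr unfolding character_def by blast
lemma th_0[simp]: "\<theta> 0 = 0" using th_add[of 0 0] by simp
lemma th_diff: "\<theta> (a - b) = \<theta> a - \<theta> b"
  by (metis add_diff_cancel_right' diff_add_cancel th_add)
lemma th_scaleR: "\<theta> (r *\<^sub>R a) = r *\<^sub>R \<theta> a"
  by (metis scaleC_of_real scaleR_conv_of_real th_scale)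

lemma th_bound: "cmod (\<theta> a) \<le> norm a"
proof (rule ccontr)
  assume "\<not> ?thesis"
  hence lt: "norm a < cmod (\<theta> a)" by simp
  hence nz: "\<theta> a \<noteq> 0" by auto
  define a' where "a' = (1 / \<theta> a) *\<^sub>C a"
  have t1: "\<theta> a' = 1" using nz by (simp add: a'_def th_scale)
  have na: "norm a' < 1" using lt nz by (simp add: a'_def norm_scaleC norm_divide divide_less_eq)
  have "\<exists>!x. a' + a' * x = x"
  proof (rule banach_fix_type[of "norm a'"])
    show "0 \<le> norm a'" by simp
    show "norm a' < 1" by (rule na)
    show "\<forall>x y. dist (a' + a' * x) (a' + a' * y) \<le> norm a' * dist x y"
      by (auto simp: dist_norm right_diff_distrib[symmetric] norm_mult_ineq)
  qed
  then obtain b where b: "a' + a' * b = b" by blast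
  have "\<theta> b = 1 + \<theta> b" using arg_cong[OF b, of \<theta>] by (simp add: th_add th_mult t1)
  then show False by simp
qed

lemma bl_th: "bounded_linear \<theta>"
  by (rule bounded_linear_intro[of _ 1]) (auto simp: th_add th_scaleR th_bound)

lemma L_addp: "L (p + q) x = L p x + L q x" using bim unfolding lau_banach_bimodule_def
  by (elim conjE) ((drule spec)+, assumption)
lemma L_addx: "L p (x + y) = L p x + L p y" using bim unfolding lau_banach_bimodule_def
  by (elim conjE) ((drule spec)+, assumption)
lemma L_scp: "L (lau_scale c p) x = c *\<^sub>C L p x" using bim unfolding lau_banach_bimodule_def
  by (elim conjE) ((drule spec)+, assumption)
lemma L_scx: "L p (c *\<^sub>C x) = c *\<^sub>C L p x" using bim unfolding lau_banach_bimodule_def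
  by (elim conjE) ((drule spec)+, assumption)
lemma R_addp: "R x (p + q) = R x p + R x q" using bim unfolding lau_banach_bimodule_def
  by (elim conjE) ((drule spec)+, assumption)
lemma R_addx: "R (x + y) p = R x p + R y p" using bim unfolding lau_banach_bimodule_def
  by (elim conjE) ((drule spec)+, assumption)
lemma R_scp: "R x (lau_scale c p) = c *\<^sub>C R x p" using bim unfolding lau_banach_bimodule_def
  by (elim conjE) ((drule spec)+, assumption)
lemma R_scx: "R (c *\<^sub>C x) p = c *\<^sub>C R x p" using bim unfolding lau_banach_bimodule_def
  by (elim conjE) ((drule spec)+, assumption)
lemma L_mult: "L (lau_mult \<theta> p q) x = L p (L q x)" using bim unfolding lau_banach_bimodule_def
  by (elim conjE) ((drule spec)+, assumption)
lemma R_mult: "R x (lau_mult \<theta> p q) = R (R x p) q" using bim unfolding lau_banach_bimodule_def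
  by (elim conjE) ((drule spec)+, assumption)
lemma LR: "R (L p x) q = L p (R x q)" using bim unfolding lau_banach_bimodule_def
  by (elim conjE) ((drule spec)+, assumption)
lemma Kb: "\<exists>K. \<forall>p x. norm (L p x) \<le> K * lau_norm p * norm x \<and> norm (R x p) \<le> K * lau_norm p * norm x"
  using bim unfolding lau_banach_bimodule_def by (elim conjE) assumption

lemma L_0p[simp]: "L 0 x = 0" using L_addp[of 0 0 x] by simp
lemma L_0x[simp]: "L p 0 = 0" using L_addx[of p 0 0] by simp
lemma R_0p[simp]: "R x 0 = 0" using R_addp[of x 0 0] by simp
lemma R_0x[simp]: "R 0 p = 0" using R_addx[of 0 0 p] by simp
lemma L_diffp: "L (p - q) x = L p x - L q x" by (metis L_addp add_diff_cancel_right' diff_add_cancel)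
lemma L_diffx: "L p (x - y) = L p x - L p y" by (metis L_addx add_diff_cancel_right' diff_add_cancel)
lemma R_diffp: "R x (p - q) = R x p - R x q" by (metis R_addp add_diff_cancel_right' diff_add_cancel)
lemma R_diffx: "R (x - y) p = R x p - R y p" by (metis R_addx add_diff_cancel_right' diff_add_cancel)
lemma L_minusx: "L p (- x) = - L p x" by (metis L_diffx diff_0 L_0x)
lemma R_minusx: "R (- x) p = - R x p" by (metis R_diffx diff_0 R_0x)
lemma L_0u[simp]: "L (0, 0) x = 0" using L_0p by (simp add: zero_prod_def)
lemma R_0u[simp]: "R x (0, 0) = 0" using R_0p by (simp add: zero_prod_def)

lemma bl_Lp: "bounded_linear (\<lambda>p. L p x)"
proof -
  obtain K where K: "\<And>p x. norm (L p x) \<le> K * lau_norm p * norm x" using Kb by blast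
  show ?thesis
  proof (rule bounded_linear_intro[of _ "2 * \<bar>K\<bar> * norm x"])
    show "L (p + q) x = L p x + L q x" for p q by (rule L_addp)
    show "L (r *\<^sub>R p) x = r *\<^sub>R L p x" for r p
      using L_scp[of "complex_of_real r" p x] by (simp add: lau_scale_real scaleC_of_real)
    show "norm (L p x) \<le> norm p * (2 * \<bar>K\<bar> * norm x)" for p
    proof -
      have "norm (L p x) \<le> K * lau_norm p * norm x" by (rule K)
      also have "\<dots> \<le> \<bar>K\<bar> * (2 * norm p) * norm x"
        using lau_norm_le[of p] by (intro mult_right_mono) (auto intro!: mult_mono simp: lau_norm_def)
      finally show ?thesis by (simp add: algebra_simps)
    qed
  qed
qed

lemma bl_Rp: "bounded_linear (\<lambda>p. R x p)"
proof -
  obtain K where K: "\<And>p x. norm (R x p) \<le> K * lau_norm p * norm x" using Kb by blast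
  show ?thesis
  proof (rule bounded_linear_intro[of _ "2 * \<bar>K\<bar> * norm x"])
    show "R x (p + q) = R x p + R x q" for p q by (rule R_addp)
    show "R x (r *\<^sub>R p) = r *\<^sub>R R x p" for r p
      using R_scp[of x "complex_of_real r" p] by (simp add: lau_scale_real scaleC_of_real)
    show "norm (R x p) \<le> norm p * (2 * \<bar>K\<bar> * norm x)" for p
    proof -
      have "norm (R x p) \<le> K * lau_norm p * norm x" by (rule K)
      also have "\<dots> \<le> \<bar>K\<bar> * (2 * norm p) * norm x"
        using lau_norm_le[of p] by (intro mult_right_mono) (auto intro!: mult_mono simp: lau_norm_def)
      finally show ?thesis by (simp add: algebra_simps)
    qed
  qed
qed

lemma bl_Lx: "bounded_linear (\<lambda>x. L p x)"
proof -
  obtain K where K: "\<And>p x. norm (L p x) \<le> K * lau_norm p * norm x" using Kb by blast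
  show ?thesis
  proof (rule bounded_linear_intro[of _ "K * lau_norm p"])
    show "L p (x + y) = L p x + L p y" for x y by (rule L_addx)
    show "L p (r *\<^sub>R x) = r *\<^sub>R L p x" for r x
      using L_scx[of p "complex_of_real r" x] by (simp add: scaleC_of_real)
    show "norm (L p x) \<le> norm x * (K * lau_norm p)" for x
      using K[of p x] by (simp add: algebra_simps)
  qed
qed

lemma bl_Rx: "bounded_linear (\<lambda>y. R y q)"
proof -
  obtain K where K: "\<And>p y. norm (R y p) \<le> K * lau_norm p * norm y" using Kb by blast
  show ?thesis
  proof (rule bounded_linear_intro[of _ "K * lau_norm q"])
    show "R (y + z) q = R y q + R z q" for y z by (rule R_addx)
    show "R (r *\<^sub>R y) q = r *\<^sub>R R y q" for r y
      using R_scx[where c="complex_of_real r"] by (simp add: scaleC_of_real)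
    show "norm (R y q) \<le> norm y * (K * lau_norm q)" for y
      using K[of y q] by (simp add: algebra_simps)
  qed
qed

lemma bb_add_left: "lau_mult \<theta> (p + p') q = lau_mult \<theta> p q + lau_mult \<theta> p' q"
  by (cases p; cases p'; cases q) (simp add: th_add scaleC_add_left scaleC_add_right algebra_simps)
lemma bb_add_right: "lau_mult \<theta> p (q + q') = lau_mult \<theta> p q + lau_mult \<theta> p q'"
  by (cases p; cases q'; cases q) (simp add: th_add scaleC_add_left scaleC_add_right algebra_simps)
lemma bb_scale_left: "lau_mult \<theta> (r *\<^sub>R p) q = r *\<^sub>R lau_mult \<theta> p q"
  by (cases p; cases q) (simp add: th_scaleR scaleC_scaleR_left scaleC_scaleR_right scaleR_add_right)
lemma bb_scale_right: "lau_mult \<theta> p (r *\<^sub>R q) = r *\<^sub>R lau_mult \<theta> p q"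
  by (cases p; cases q) (simp add: th_scaleR scaleC_scaleR_left scaleC_scaleR_right scaleR_add_right)
lemma bb_bound: "\<exists>K. \<forall>p q :: 'a \<times> 'u. norm (lau_mult \<theta> p q) \<le> norm p * norm q * K"
proof (rule exI[of _ 4], intro allI)
  fix p q :: "'a \<times> 'u"
  obtain a u b v where pq: "p = (a, u)" "q = (b, v)" by fastforce
  have na: "norm a \<le> norm p" "norm u \<le> norm p" "norm b \<le> norm q" "norm v \<le> norm q"
    using pq norm_fst_le[of a u] norm_snd_le[of u a] norm_fst_le[of b v] norm_snd_le[of v b] by auto
  have "norm (lau_mult \<theta> p q) \<le> norm (a * b) + norm (\<theta> a *\<^sub>C v + \<theta> b *\<^sub>C u + u * v)"
    using pq norm_Pair_le by simp
  also have "\<dots> \<le> norm a * norm b + (norm a * norm v + norm b * norm u + norm u * norm v)"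
  proof (intro add_mono norm_mult_ineq)
    have "norm (\<theta> a *\<^sub>C v + \<theta> b *\<^sub>C u + u * v) \<le> norm (\<theta> a *\<^sub>C v) + norm (\<theta> b *\<^sub>C u) + norm (u * v)"
      by (meson add_mono norm_triangle_ineq order_trans order_refl)
    also have "\<dots> \<le> norm a * norm v + norm b * norm u + norm u * norm v"
      using th_bound[of a] th_bound[of b]
      by (intro add_mono norm_mult_ineq) (auto simp: norm_scaleC intro!: mult_right_mono)
    finally show "norm (\<theta> a *\<^sub>C v + \<theta> b *\<^sub>C u + u * v) \<le> norm a * norm v + norm b * norm u + norm u * norm v" .
  qed
  also have "\<dots> \<le> norm p * norm q * 4"
  proof -
    have "norm a * norm b \<le> norm p * norm q" "norm a * norm v \<le> norm p * norm q"
      "norm b * norm u \<le> norm p * norm q" "norm u * norm v \<le> norm p * norm q"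
      using na by (auto intro!: mult_mono simp: mult.commute[of "norm b"])
    then show ?thesis by linarith
  qed
  finally show "norm (lau_mult \<theta> p q) \<le> norm p * norm q * 4" .
qed

lemma bb_mult: "bounded_bilinear (lau_mult \<theta> :: 'a \<times> 'u \<Rightarrow> _)"
  by (rule bounded_bilinear.intro) (fact bb_add_left bb_add_right bb_scale_left bb_scale_right bb_bound)+


lemma csb_intro:
  assumes "closed M" "0 \<in> M" "\<And>x y. x \<in> M \<Longrightarrow> y \<in> M \<Longrightarrow> x + y \<in> M"
    "\<And>c x. x \<in> M \<Longrightarrow> c *\<^sub>C x \<in> M"
    "\<And>p x. x \<in> M \<Longrightarrow> L p x \<in> M" "\<And>p x. x \<in> M \<Longrightarrow> R x p \<in> M"
  shows "closed_subbimodule L R M"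
  using assms unfolding closed_subbimodule_def by blast

lemma cont_L: "continuous_on UNIV (L p)" using linear_continuous_on[OF bl_Lx] by simp
lemma cont_R: "continuous_on UNIV (\<lambda>x. R x p)" using linear_continuous_on[OF bl_Rx] by simp

definition "LA = {x. \<forall>u. L (0, u) x = 0}"
definition "RA = {x. \<forall>u. R x (0, u) = 0}"
definition "NN = {x. \<forall>u a. \<theta> a = 0 \<longrightarrow> L (0, u) (R x (a, 0)) = 0 \<and> R (L (a, 0) x) (0, u) = 0}"

lemma mult_0u: "lau_mult \<theta> (0, u) p = (0, \<theta> (fst p) *\<^sub>C u + u * snd p)"
  by (cases p) simp
lemma mult_u0: "lau_mult \<theta> p (0, u) = (0, \<theta> (fst p) *\<^sub>C u + snd p * u)"
  by (cases p) simp

lemma csb_LA: "closed_subbimodule L R LA"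
proof (rule csb_intro)
  show "closed LA" unfolding LA_def
    by (intro closed_Collect_all closed_Collect_eq cont_L continuous_on_const)
  show "0 \<in> LA" by (simp add: LA_def)
  show "x + y \<in> LA" if "x \<in> LA" "y \<in> LA" for x y using that by (simp add: LA_def L_addx)
  show "c *\<^sub>C x \<in> LA" if "x \<in> LA" for c x using that by (simp add: LA_def L_scx)
  show "L p x \<in> LA" if "x \<in> LA" for p x
    using that by (simp add: LA_def L_mult[symmetric] mult_0u)
  show "R x p \<in> LA" if "x \<in> LA" for p x
    using that by (simp add: LA_def LR[symmetric])
qed

lemma csb_RA: "closed_subbimodule L R RA"
proof (rule csb_intro)
  show "closed RA" unfolding RA_def
    by (intro closed_Collect_all closed_Collect_eq cont_R continuous_on_const)
  show "0 \<in> RA" by (simp add: RA_def)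
  show "x + y \<in> RA" if "x \<in> RA" "y \<in> RA" for x y using that by (simp add: RA_def R_addx)
  show "c *\<^sub>C x \<in> RA" if "x \<in> RA" for c x using that by (simp add: RA_def R_scx)
  show "L p x \<in> RA" if "x \<in> RA" for p x
    using that by (simp add: RA_def LR)
  show "R x p \<in> RA" if "x \<in> RA" for p x
    using that by (simp add: RA_def R_mult[symmetric] mult_u0)
qed

lemma ann_eq: "ann_U L R = LA \<inter> RA"
  by (auto simp: ann_U_def LA_def RA_def)

lemma csb_Int: "closed_subbimodule L R M \<Longrightarrow> closed_subbimodule L R M' \<Longrightarrow> closed_subbimodule L R (M \<inter> M')"
  unfolding closed_subbimodule_def by (auto intro: closed_Int)

lemma csb_ann: "closed_subbimodule L R (ann_U L R)"
  unfolding ann_eq by (intro csb_Int csb_LA csb_RA)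

lemma csb_NN: "closed_subbimodule L R NN"
proof (rule csb_intro)
  show "closed NN" unfolding NN_def
  proof (intro closed_Collect_all closed_Collect_imp closed_Collect_conj closed_Collect_eq continuous_on_const)
    show "open {x. \<theta> a = 0}" for a by (cases "\<theta> a = 0") auto
    show "continuous_on UNIV (\<lambda>x. L (0, u) (R x (a, 0)))" for u a
      by (intro linear_continuous_on bounded_linear_compose[OF bl_Lx bl_Rx])
    show "continuous_on UNIV (\<lambda>x. R (L (a, 0) x) (0, u))" for u a
      by (intro linear_continuous_on bounded_linear_compose[OF bl_Rx bl_Lx])
  qed
  show "0 \<in> NN" by (simp add: NN_def)
  show "x + y \<in> NN" if "x \<in> NN" "y \<in> NN" for x y
    using that by (simp add: NN_def R_addx L_addx)
  show "c *\<^sub>C x \<in> NN" if "x \<in> NN" for c x using that by (simp add: NN_def R_scx L_scx)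
  show "L p x \<in> NN" if x: "x \<in> NN" for p x
  proof -
    obtain b v where p: "p = (b, v)" by fastforce
    have "L (0, u) (R (L p x) (a, 0)) = 0 \<and> R (L (a, 0) (L p x)) (0, u) = 0" if ta: "\<theta> a = 0" for u a
    proof
      have "L (0, u) (R (L p x) (a, 0)) = L (lau_mult \<theta> (0, u) p) (R x (a, 0))"
        by (simp add: LR L_mult)
      also have "\<dots> = 0" using x by (simp add: NN_def mult_0u ta)
      finally show "L (0, u) (R (L p x) (a, 0)) = 0" .
      have "R (L (a, 0) (L p x)) (0, u) = R (L (a * b, 0) x) (0, u)"
        using ta by (simp add: L_mult[symmetric] p)
      also have "\<dots> = 0" using x ta by (simp add: NN_def th_mult)
      finally show "R (L (a, 0) (L p x)) (0, u) = 0" .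
    qed
    then show ?thesis by (simp add: NN_def)
  qed
  show "R x p \<in> NN" if x: "x \<in> NN" for p x
  proof -
    obtain b v where p: "p = (b, v)" by fastforce
    have "L (0, u) (R (R x p) (a, 0)) = 0 \<and> R (L (a, 0) (R x p)) (0, u) = 0" if ta: "\<theta> a = 0" for u a
    proof
      have "L (0, u) (R (R x p) (a, 0)) = L (0, u) (R x (b * a, 0))"
        using ta by (simp add: R_mult[symmetric] p)
      also have "\<dots> = 0" using x ta by (simp add: NN_def th_mult)
      finally show "L (0, u) (R (R x p) (a, 0)) = 0" .
      have "R (L (a, 0) (R x p)) (0, u) = R (L (a, 0) x) (lau_mult \<theta> p (0, u))"
        by (simp add: LR[symmetric] R_mult)
      also have "\<dots> = 0" using x ta by (simp add: NN_def mult_u0)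
      finally show "R (L (a, 0) (R x p)) (0, u) = 0" .
    qed
    then show ?thesis by (simp add: NN_def)
  qed
qed


lemma main:
  fixes D :: "'a \<times> 'u \<Rightarrow> 'x"
  assumes thnz: "\<theta> \<noteq> (\<lambda>_. 0)" and simple: "simple_bimodule L R"
    and der: "lau_derivation \<theta> L R D"
    and annz: "ann_U L R \<noteq> UNIV" and Znot: "center_A L R \<noteq> UNIV"
  shows "continuous_on UNIV D"
proof -
  have sb: "\<And>M. closed_subbimodule L R M \<Longrightarrow> M = {0} \<or> M = UNIV"
    using simple unfolding simple_bimodule_def by blast
  have ann0: "ann_U L R = {0}" using sb[OF csb_ann] annz by blast
  obtain x1 a1 where x1: "L (a1, 0) x1 \<noteq> R x1 (a1, 0)"
    using Znot unfolding center_A_def by blast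
  obtain e where e: "\<theta> e = 1"
  proof -
    obtain a where "\<theta> a \<noteq> 0" using thnz by blast
    then show ?thesis using that[of "(1 / \<theta> a) *\<^sub>C a"] by (simp add: th_scale)
  qed
  have D_add: "D (p + q) = D p + D q" for p q using der unfolding lau_derivation_def by blast
  have D_sc: "D (lau_scale c p) = c *\<^sub>C D p" for c p using der unfolding lau_derivation_def by blast
  have D_mult: "D (lau_mult \<theta> p q) = R (D p) q + L p (D q)" for p q
    using der unfolding lau_derivation_def by blast
  have D_0: "D 0 = 0" using D_add[of 0 0] by simp
  have D_00: "D (0, 0) = 0" using D_0 by (simp add: zero_prod_def)
  have D_diff: "D (p - q) = D p - D q" for p q by (metis D_add add_diff_cancel_right' diff_add_cancel)
  have lin: "linear D"
  proof (rule linearI)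
    show "D (p + q) = D p + D q" for p q by (rule D_add)
    show "D (r *\<^sub>R p) = r *\<^sub>R D p" for r p
      using D_sc[of "complex_of_real r" p] by (simp add: lau_scale_real scaleC_of_real)
  qed
  have ann_mem: "y = 0" if "\<And>u. L (0, u) y = 0" "\<And>u. R y (0, u) = 0" for y
    using that ann0 unfolding ann_U_def by blast
  from sb[OF csb_NN] show ?thesis
  proof
    assume N0: "NN = {0}"
    have "bounded_linear D"
    proof (rule closed_graph_thm[OF lin])
      fix q z assume q: "q \<longlonglongrightarrow> 0" and Dq: "(\<lambda>k. D (q k)) \<longlonglongrightarrow> z"
      have "z \<in> NN"
        unfolding NN_def
      proof (intro CollectI allI impI conjI)
        fix u a assume ta: "\<theta> a = 0"
        show "L (0, u) (R z (a, 0)) = 0"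
        proof -
          define H where "H p = - R (R (D (0, u)) p) (a, 0) - L (lau_mult \<theta> (0, u) p) (D (a, 0))" for p
          have id: "L (0, u) (R (D p) (a, 0)) = H p" for p
          proof -
            have "lau_mult \<theta> (lau_mult \<theta> (0, u) p) (a, 0) = (0, 0)" using ta by (simp add: mult_0u)
            hence "D (lau_mult \<theta> (lau_mult \<theta> (0, u) p) (a, 0)) = 0" using D_00 by simp
            hence "R (R (D (0, u)) p) (a, 0) + L (0, u) (R (D p) (a, 0)) + L (lau_mult \<theta> (0, u) p) (D (a, 0)) = 0"
              by (simp add: D_mult R_addx LR)
            then show ?thesis unfolding H_def by (simp add: algebra_simps eq_neg_iff_add_eq_0)
          qed
          have blH: "bounded_linear H" unfolding H_def
            by (intro bounded_linear_sub bounded_linear_minus bounded_linear_compose[OF bl_Rx bl_Rp]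
                bounded_linear_compose[OF bl_Lp bounded_bilinear.bounded_linear_right[OF bb_mult]])
          have "(\<lambda>k. H (q k)) \<longlonglongrightarrow> 0" by (rule bounded_linear.tendsto_zero[OF blH q])
          moreover have "(\<lambda>k. L (0, u) (R (D (q k)) (a, 0))) \<longlonglongrightarrow> L (0, u) (R z (a, 0))"
            by (rule bounded_linear.tendsto[OF bounded_linear_compose[OF bl_Lx bl_Rx] Dq])
          ultimately show ?thesis unfolding id using LIMSEQ_unique by blast
        qed
        show "R (L (a, 0) z) (0, u) = 0"
        proof -
          define H where "H p = - R (R (D (a, 0)) p) (0, u) - L (lau_mult \<theta> (a, 0) p) (D (0, u))" for p
          have id: "R (L (a, 0) (D p)) (0, u) = H p" for p
          proof -
            obtain b v where p: "p = (b, v)" by fastforce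
            have "lau_mult \<theta> (lau_mult \<theta> (a, 0) p) (0, u) = (0, 0)" using ta by (simp add: p th_mult)
            hence "D (lau_mult \<theta> (lau_mult \<theta> (a, 0) p) (0, u)) = 0" using D_00 by simp
            hence "R (R (D (a, 0)) p) (0, u) + R (L (a, 0) (D p)) (0, u) + L (lau_mult \<theta> (a, 0) p) (D (0, u)) = 0"
              by (simp add: D_mult R_addx)
            then show ?thesis unfolding H_def by (simp add: algebra_simps eq_neg_iff_add_eq_0)
          qed
          have blH: "bounded_linear H" unfolding H_def
            by (intro bounded_linear_sub bounded_linear_minus bounded_linear_compose[OF bl_Rx bl_Rp]
                bounded_linear_compose[OF bl_Lp bounded_bilinear.bounded_linear_right[OF bb_mult]])
          have "(\<lambda>k. H (q k)) \<longlonglongrightarrow> 0" by (rule bounded_linear.tendsto_zero[OF blH q])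
          moreover have "(\<lambda>k. R (L (a, 0) (D (q k))) (0, u)) \<longlonglongrightarrow> R (L (a, 0) z) (0, u)"
            by (rule bounded_linear.tendsto[OF bounded_linear_compose[OF bl_Rx bl_Lx] Dq])
          ultimately show ?thesis unfolding id using LIMSEQ_unique by blast
        qed
      qed
      with N0 show "z = 0" by simp
    qed
    then show ?thesis by (rule linear_continuous_on)
  next
    assume N1: "NN = UNIV"
    have NNx: "L (0, u) (R x (a, 0)) = 0 \<and> R (L (a, 0) x) (0, u) = 0" if "\<theta> a = 0" for x u a
    proof -
      have "x \<in> NN" using N1 by simp
      then show ?thesis using that unfolding NN_def by blast
    qed
    have X0: "L (a, 0) x = 0 \<and> R x (a, 0) = 0" if ta: "\<theta> a = 0" for x a
    proof -
      from sb[OF csb_LA] show ?thesis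
      proof
        assume LA0: "LA = {0}"
        have "R x (a, 0) \<in> LA" using NNx[OF ta] by (simp add: LA_def)
        moreover have "L (a, 0) x \<in> LA" using ta by (simp add: LA_def L_mult[symmetric])
        ultimately show ?thesis using LA0 by simp
      next
        assume LA1: "LA = UNIV"
        have "RA \<noteq> UNIV" using annz LA1 by (simp add: ann_eq)
        hence RA0: "RA = {0}" using sb[OF csb_RA] by blast
        have "L (a, 0) x \<in> RA" using NNx[OF ta] by (simp add: RA_def)
        moreover have "R x (a, 0) \<in> RA" using ta by (simp add: RA_def R_mult[symmetric])
        ultimately show ?thesis using RA0 by simp
      qed
    qed
    define E where "E = (e, 0::'u)"
    have Ldec: "L (a, 0) x = \<theta> a *\<^sub>C L E x" for a x
    proof -
      have "(a, 0::'u) = (a - \<theta> a *\<^sub>C e, 0) + lau_scale (\<theta> a) E"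
        by (simp add: E_def lau_scale_def)
      moreover have "\<theta> (a - \<theta> a *\<^sub>C e) = 0" by (simp add: th_diff th_scale e)
      ultimately show ?thesis using X0 by (metis L_addp L_scp add_0)
    qed
    have Rdec: "R x (a, 0) = \<theta> a *\<^sub>C R x E" for a x
    proof -
      have "(a, 0::'u) = (a - \<theta> a *\<^sub>C e, 0) + lau_scale (\<theta> a) E"
        by (simp add: E_def lau_scale_def)
      moreover have "\<theta> (a - \<theta> a *\<^sub>C e) = 0" by (simp add: th_diff th_scale e)
      ultimately show ?thesis using X0 by (metis R_addp R_scp add_0)
    qed
    have th_ee: "\<theta> (e * e - e) = 0" by (simp add: th_diff th_mult e)
    have LEE: "L E (L E x) = L E x" for x
    proof -
      have "L E (L E x) = L (e * e, 0) x" by (simp add: L_mult[symmetric] E_def)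
      also have "\<dots> = L (e * e - e, 0) x + L E x" by (simp add: E_def L_addp[symmetric])
      also have "\<dots> = L E x" using X0[OF th_ee] by simp
      finally show ?thesis .
    qed
    have REE: "R (R x E) E = R x E" for x
    proof -
      have "R (R x E) E = R x (e * e, 0)" by (simp add: R_mult[symmetric] E_def)
      also have "\<dots> = R x (e * e - e, 0) + R x E" by (simp add: E_def R_addp[symmetric])
      also have "\<dots> = R x E" using X0[OF th_ee] by simp
      finally show ?thesis .
    qed
    have EpL: "L (lau_mult \<theta> E p) x = L (lau_mult \<theta> p E) x" for p x
    proof -
      obtain b v where p: "p = (b, v)" by fastforce
      have "lau_mult \<theta> E p = (e * b - b * e, 0) + lau_mult \<theta> p E"
        by (simp add: p E_def e)
      moreover have "\<theta> (e * b - b * e) = 0" by (simp add: th_diff th_mult)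
      ultimately show ?thesis using X0 by (simp add: L_addp)
    qed
    have EpR: "R x (lau_mult \<theta> E p) = R x (lau_mult \<theta> p E)" for p x
    proof -
      obtain b v where p: "p = (b, v)" by fastforce
      have "lau_mult \<theta> E p = (e * b - b * e, 0) + lau_mult \<theta> p E"
        by (simp add: p E_def e)
      moreover have "\<theta> (e * b - b * e) = 0" by (simp add: th_diff th_mult)
      ultimately show ?thesis using X0 by (simp add: R_addp)
    qed
    have M1: "closed_subbimodule L R {x. L E x = x}"
    proof (rule csb_intro)
      show "closed {x. L E x = x}" by (intro closed_Collect_eq cont_L continuous_on_id)
      show "0 \<in> {x. L E x = x}" by simp
      show "x + y \<in> {x. L E x = x}" if "x \<in> {x. L E x = x}" "y \<in> {x. L E x = x}" for x y
        using that by (simp add: L_addx)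
      show "c *\<^sub>C x \<in> {x. L E x = x}" if "x \<in> {x. L E x = x}" for c x using that by (simp add: L_scx)
      show "L p x \<in> {x. L E x = x}" if "x \<in> {x. L E x = x}" for p x
        using that EpL[of p x] L_mult[of p E x] L_mult[of E p x] by simp
      show "R x p \<in> {x. L E x = x}" if "x \<in> {x. L E x = x}" for p x
        using that by (simp add: LR[symmetric])
    qed
    have M2: "closed_subbimodule L R {x. R x E = x}"
    proof (rule csb_intro)
      show "closed {x. R x E = x}" by (intro closed_Collect_eq cont_R continuous_on_id)
      show "0 \<in> {x. R x E = x}" by simp
      show "x + y \<in> {x. R x E = x}" if "x \<in> {x. R x E = x}" "y \<in> {x. R x E = x}" for x y
        using that by (simp add: R_addx)
      show "c *\<^sub>C x \<in> {x. R x E = x}" if "x \<in> {x. R x E = x}" for c x using that by (simp add: R_scx)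
      show "L p x \<in> {x. R x E = x}" if "x \<in> {x. R x E = x}" for p x
        using that by (simp add: LR)
      show "R x p \<in> {x. R x E = x}" if "x \<in> {x. R x E = x}" for p x
        using that EpR[of x p] R_mult[of x p E] R_mult[of x E p] by simp
    qed
    have LE: "(\<forall>x. L E x = 0) \<or> (\<forall>x. L E x = x)"
    proof -
      from sb[OF M1] show ?thesis
      proof
        assume "{x. L E x = x} = {0}"
        hence "L E x = 0" for x using LEE[of x] by blast
        thus ?thesis by blast
      qed auto
    qed
    have RE: "(\<forall>x. R x E = 0) \<or> (\<forall>x. R x E = x)"
    proof -
      from sb[OF M2] show ?thesis
      proof
        assume "{x. R x E = x} = {0}"
        hence "R x E = 0" for x using REE[of x] by blast
        thus ?thesis by blast
      qed auto
    qed
    have x1': "L E x1 \<noteq> R x1 E" using x1 Ldec[of a1 x1] Rdec[of x1 a1] by auto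
    have E0u: "lau_mult \<theta> E (0, v) = (0, v)" "lau_mult \<theta> (0, v) E = (0, v)" for v
      by (simp_all add: E_def e)
    show ?thesis
    proof (cases "\<forall>x. L E x = x")
      case LE1: True
      with RE x1' have RE0: "\<And>x. R x E = 0" by auto
      have R0: "R x p = 0" for x p
      proof -
        obtain b v where p: "p = (b, v)" by fastforce
        have "p = (b, 0) + lau_mult \<theta> E (0, v)" by (simp add: p E0u)
        then have "R x p = R x (b, 0) + R (R x E) (0, v)" by (simp add: R_addp R_mult)
        then show ?thesis by (simp add: Rdec RE0)
      qed
      have Dq: "D q = L q (D E)" for q
      proof -
        obtain b v where q: "q = (b, v)" by fastforce
        have qE: "lau_mult \<theta> q E = (b * e, v)" by (simp add: q E_def e)
        have "D (lau_mult \<theta> q E) = L q (D E)" by (simp add: D_mult R0)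
        moreover have "q - lau_mult \<theta> q E = (b - b * e, 0)" unfolding qE by (simp add: q)
        moreover have "D (b - b * e, 0) = 0"
        proof (rule ann_mem)
          have tm: "\<theta> (b - b * e) = 0" by (simp add: th_diff th_mult e)
          show "L (0, u) (D (b - b * e, 0)) = 0" for u
          proof -
            have "lau_mult \<theta> (0, u) (b - b * e, 0) = (0, 0)" using tm by simp
            then have "D (lau_mult \<theta> (0, u) (b - b * e, 0)) = 0" using D_00 by simp
            then show ?thesis by (simp only: D_mult R0 add.left_neutral add.right_neutral)
          qed
          show "R (D (b - b * e, 0)) (0, u) = 0" for u by (rule R0)
        qed
        ultimately show ?thesis by (metis D_diff eq_iff_diff_eq_0)
      qed
      have bl: "bounded_linear (\<lambda>q. L q (D E))" by (rule bl_Lp)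
      have eqD: "(\<lambda>q. L q (D E)) = D" by (rule ext) (rule Dq[symmetric])
      have "bounded_linear D" using bl unfolding eqD .
      then show ?thesis by (rule linear_continuous_on)
    next
      case False
      with LE have LE0: "\<And>x. L E x = 0" by auto
      with x1' RE have RE1: "\<And>x. R x E = x" by auto
      have L0: "L p x = 0" for x p
      proof -
        obtain b v where p: "p = (b, v)" by fastforce
        have "p = (b, 0) + lau_mult \<theta> (0, v) E" by (simp add: p E0u)
        then have "L p x = L (b, 0) x + L (0, v) (L E x)" by (simp add: L_addp L_mult)
        then show ?thesis by (simp add: Ldec LE0)
      qed
      have Dq: "D q = R (D E) q" for q
      proof -
        obtain b v where q: "q = (b, v)" by fastforce
        have Eq: "lau_mult \<theta> E q = (e * b, v)" by (simp add: q E_def e)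
        have "D (lau_mult \<theta> E q) = R (D E) q" by (simp add: D_mult L0)
        moreover have "q - lau_mult \<theta> E q = (b - e * b, 0)" unfolding Eq by (simp add: q)
        moreover have "D (b - e * b, 0) = 0"
        proof (rule ann_mem)
          have tm: "\<theta> (b - e * b) = 0" by (simp add: th_diff th_mult e)
          show "R (D (b - e * b, 0)) (0, u) = 0" for u
          proof -
            have "lau_mult \<theta> (b - e * b, 0) (0, u) = (0, 0)" using tm by simp
            then have "D (lau_mult \<theta> (b - e * b, 0) (0, u)) = 0" using D_00 by simp
            then show ?thesis by (simp only: D_mult L0 add.left_neutral add.right_neutral)
          qed
          show "L (0, u) (D (b - e * b, 0)) = 0" for u by (rule L0)
        qed
        ultimately show ?thesis by (metis D_diff eq_iff_diff_eq_0)
      qed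
      have bl: "bounded_linear (\<lambda>q. R (D E) q)" by (rule bl_Rp)
      have eqD: "(\<lambda>q. R (D E) q) = D" by (rule ext) (rule Dq[symmetric])
      have "bounded_linear D" using bl unfolding eqD .
      then show ?thesis by (rule linear_continuous_on)
    qed
  qed
qed

end

theorem corollary2p10:
  fixes \<theta> :: "'a::complex_banach_algebra \<Rightarrow> complex"
    and L :: "'a \<times> 'u::complex_banach_algebra \<Rightarrow> 'x::complex_banach \<Rightarrow> 'x"
    and R :: "'x \<Rightarrow> 'a \<times> 'u \<Rightarrow> 'x"
    and D :: "'a \<times> 'u \<Rightarrow> 'x"
  assumes "character \<theta>" and "\<theta> \<noteq> (\<lambda>_. 0)"
    and "lau_banach_bimodule \<theta> L R"
    and "simple_bimodule L R"
    and "lau_derivation \<theta> L R D"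
    and "(ann_U L R \<noteq> UNIV \<and> center_A L R \<noteq> UNIV) \<or>
         (ann_U L R = {0} \<and> center_A L R \<noteq> UNIV)"
  shows "continuous_on UNIV D"
proof -
  interpret LS \<theta> L R using assms(1,3) by unfold_locales
  have Z: "center_A L R \<noteq> UNIV" using assms(6) by blast
  have "ann_U L R \<noteq> UNIV"
  proof
    assume A: "ann_U L R = UNIV"
    with assms(6) have "(UNIV :: 'x set) = {0}" by auto
    then have z: "x = 0" for x :: 'x by (metis UNIV_I singletonD)
    have "L (a, 0) x = R x (a, 0)" for a x
      using z[of "L (a, 0) x"] z[of "R x (a, 0)"] by (simp only:)
    then have "center_A L R = UNIV" unfolding center_A_def by auto
    with Z show False by simp
  qed
  then show ?thesis using main[OF assms(2,4,5) _ Z] by simp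
qed

end
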